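(* Let $T\ge1$, let $\tau>0$ with $\tau<\frac{1}{4L}$, and let $(x_t)$ be generated from a deterministic $x_0$ by the randomized incremental proximal method $x_{t+1}=\operatorname{prox}_{\tau m g_{j_t}}(x_t-\tau\nabla f_{i_t}(x_t))$. Let $\epsilon'>0$ be arbitrary, $a=2\tau L(1+\epsilon')$ and $v=\left(1+\frac1{\epsilon'}\right)\sigma_*^2\tau$. Then for every $t\in\{0,\dots,T\}$ and every random vector $z_t$ measurable with respect to $\sigma(x_0,\dots,x_t)$, \[ \mathbb{E}_t\left[h(x_{t+1})-h(z_t)-a\,h(x_t)+a\,h^*\right]\le\frac{1}{2\tau}\mathbb{E}_t\left[\|x_t-z_t\|^2-\|x_{t+1}-z_t\|^2\right]+v+8\tau m^2L_g^2. \]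
   Context: Setting. Let $D$ be a probability distribution on an index set, and for each index $i$ let $f_i:\mathbb{R}^n\to\mathbb{R}$ be convex and differentiable with $L$-Lipschitz gradient ($L>0$). Let $f(x)=\mathbb{E}_{i\sim D}[f_i(x)]$ with $\mathbb{E}_{i\sim D}[\nabla f_i(x)]=\nabla f(x)$ for all $x$. Let $g=\sum_{j=1}^m g_j$ where each $g_j:\mathbb{R}^n\to\mathbb{R}$ is proper, convex, lower semicontinuous and $L_g$-Lipschitz. Let $h=f+g$, assume $X^*=\arg\min h\neq\emptyset$, $h^*=\min h$, and $\sigma_*^2:=\mathbb{E}_{i\sim D}\|\nabla f_i(x^* )\|^2<\infty$ for some $x^*\in X^*$. $\operatorname{prox}_{\lambda\phi}(y)=\arg\min_z\{\lambda\phi(z)+\tfrac12\|y-z\|^2\}$. At each iteration $i_t\sim D$ and $j_t$ uniform on $\{1,\dots,m\}$, independent of each other and of $x_0,\dots,x_t$. $\mathbb{E}_t$ is conditional expectation given $\sigma(x_0,\dots,x_t)$. *)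

theory Defs
  imports "HOL-Analysis.Analysis" "HOL-Probability.Probability"
begin

text \<open>For convex,
  finite-valued (hence continuous) phi the minimiser exists and is unique.\<close>
definition prox :: "('a::euclidean_space \<Rightarrow> real) \<Rightarrow> 'a \<Rightarrow> 'a" where
  "prox phi y = (SOME z. \<forall>w. phi z + (1/2) * (norm (y - z))\<^sup>2 \<le> phi w + (1/2) * (norm (y - w))\<^sup>2)"

text \<open>h = f + sum_{j=1}^m g_j (components g_j indexed by j < m).\<close>
definition hfun :: "('a \<Rightarrow> real) \<Rightarrow> (nat \<Rightarrow> 'a \<Rightarrow> real) \<Rightarrow> nat \<Rightarrow> 'a \<Rightarrow> real" where
  "hfun F g m x = F x + (\<Sum>j<m. g j x)"

definition ripm_step :: "('i \<Rightarrow> 'a::euclidean_space \<Rightarrow> 'a) \<Rightarrow> (nat \<Rightarrow> 'a \<Rightarrow> real) \<Rightarrow> nat \<Rightarrow> real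
    \<Rightarrow> 'a \<Rightarrow> 'i \<Rightarrow> nat \<Rightarrow> 'a" where
  "ripm_step df g m tau x i j = prox (\<lambda>z. tau * real m * g j z) (x - tau *\<^sub>R df i x)"

primrec ripm_iter :: "('i \<Rightarrow> 'a::euclidean_space \<Rightarrow> 'a) \<Rightarrow> (nat \<Rightarrow> 'a \<Rightarrow> real) \<Rightarrow> nat \<Rightarrow> real
    \<Rightarrow> 'a \<Rightarrow> (nat \<Rightarrow> 'i) \<Rightarrow> (nat \<Rightarrow> nat) \<Rightarrow> nat \<Rightarrow> 'a" where
  "ripm_iter df g m tau x0 is js 0 = x0"
| "ripm_iter df g m tau x0 is js (Suc t) =
     ripm_step df g m tau (ripm_iter df g m tau x0 is js t) (is t) (js t)"

end

theory Submission
  imports Defs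
begin


lemma eps_le0:
  fixes K N :: real
  assumes "N \<ge> 0" "\<And>s. 0 < s \<Longrightarrow> s \<le> 1 \<Longrightarrow> K \<le> s * N"
  shows "K \<le> 0"
proof (rule ccontr)
  assume K: "\<not> K \<le> 0"
  show False
  proof (cases "N = 0")
    case True then show False using assms(2)[of 1] K by simp
  next
    case False
    then have Np: "N > 0" using assms(1) by simp
    define s where "s = min 1 (K / (2*N))"
    have s0: "0 < s" using K Np by (simp add: s_def)
    have s1: "s \<le> 1" by (simp add: s_def)
    have "s * N \<le> K/(2*N) * N" using Np by (intro mult_right_mono) (auto simp: s_def)
    also have "\<dots> = K/2" using Np by simp
    finally show False using assms(2)[OF s0 s1] K by simp
  qed
qed

lemma nsq: "(norm (a - b))\<^sup>2 = (norm a)\<^sup>2 - 2*(a \<bullet> b) + (norm (b::'a::real_inner))\<^sup>2"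
  by (simp add: power2_norm_eq_inner inner_diff_left inner_diff_right inner_commute)

lemma descent:
  fixes f :: "'a::euclidean_space \<Rightarrow> real"
  assumes grad: "\<And>x. (f has_derivative (\<lambda>h. df x \<bullet> h)) (at x)"
    and lip: "\<And>x y. norm (df x - df y) \<le> L * norm (x - y)"
  shows "f u \<le> f x + df x \<bullet> (u - x) + L/2 * (norm (u-x))\<^sup>2"
    and "f x + df x \<bullet> (u - x) - L/2 * (norm (u-x))\<^sup>2 \<le> f u"
proof -
  define v where "v = u - x"
  define N where "N = (norm v)\<^sup>2"
  have D: "((\<lambda>s. f (x + s *\<^sub>R v)) has_real_derivative (df (x + s *\<^sub>R v) \<bullet> v)) (at s)" for s
  proof -
    have "((\<lambda>s. x + s *\<^sub>R v) has_derivative (\<lambda>t. t *\<^sub>R v)) (at s)"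
      by (auto intro!: derivative_eq_intros)
    from has_derivative_compose[OF this grad]
    have "((\<lambda>s. f (x + s *\<^sub>R v)) has_derivative (\<lambda>t. df (x + s *\<^sub>R v) \<bullet> (t *\<^sub>R v))) (at s)" .
    moreover have "(\<lambda>t. df (x + s *\<^sub>R v) \<bullet> (t *\<^sub>R v)) = (*) (df (x + s *\<^sub>R v) \<bullet> v)"
      by (auto simp: fun_eq_iff)
    ultimately show ?thesis by (simp add: has_field_derivative_def)
  qed
  have B: "\<bar>(df (x + s *\<^sub>R v) - df x) \<bullet> v\<bar> \<le> L * s * N" if "0 \<le> s" for s
  proof -
    have "\<bar>(df (x + s *\<^sub>R v) - df x) \<bullet> v\<bar> \<le> norm (df (x + s *\<^sub>R v) - df x) * norm v"
      by (rule Cauchy_Schwarz_ineq2)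
    also have "\<dots> \<le> L * norm (s *\<^sub>R v) * norm v"
      using lip[of "x + s *\<^sub>R v" x] by (intro mult_right_mono) auto
    also have "\<dots> = L * s * N" using that by (simp add: N_def power2_eq_square)
    finally show ?thesis .
  qed
  have "(\<lambda>s. f (x + s *\<^sub>R v) - s * (df x \<bullet> v) - L/2 * s\<^sup>2 * N) 1
        \<le> (\<lambda>s. f (x + s *\<^sub>R v) - s * (df x \<bullet> v) - L/2 * s\<^sup>2 * N) 0"
  proof (rule DERIV_nonpos_imp_nonincreasing[of 0 1])
    fix s :: real assume s: "0 \<le> s" "s \<le> 1"
    show "\<exists>y. ((\<lambda>s. f (x + s *\<^sub>R v) - s * (df x \<bullet> v) - L/2 * s\<^sup>2 * N) has_real_derivative y) (at s) \<and> y \<le> 0"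
      apply (rule exI[of _ "df (x + s *\<^sub>R v) \<bullet> v - df x \<bullet> v - L * s * N"])
      apply (intro conjI)
       apply (rule derivative_eq_intros D | simp)+
      using B[OF s(1)] by (simp add: inner_diff_left)
  qed simp
  then show "f u \<le> f x + df x \<bullet> (u - x) + L/2 * (norm (u-x))\<^sup>2"
    by (simp add: v_def N_def)
  have "(\<lambda>s. f (x + s *\<^sub>R v) - s * (df x \<bullet> v) + L/2 * s\<^sup>2 * N) 0
        \<le> (\<lambda>s. f (x + s *\<^sub>R v) - s * (df x \<bullet> v) + L/2 * s\<^sup>2 * N) 1"
  proof (rule DERIV_nonneg_imp_nondecreasing[of 0 1])
    fix s :: real assume s: "0 \<le> s" "s \<le> 1"
    show "\<exists>y. ((\<lambda>s. f (x + s *\<^sub>R v) - s * (df x \<bullet> v) + L/2 * s\<^sup>2 * N) has_real_derivative y) (at s) \<and> y \<ge> 0"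
      apply (rule exI[of _ "df (x + s *\<^sub>R v) \<bullet> v - df x \<bullet> v + L * s * N"])
      apply (intro conjI)
       apply (rule derivative_eq_intros D | simp)+
      using B[OF s(1)] by (simp add: inner_diff_left)
  qed simp
  then show "f x + df x \<bullet> (u - x) - L/2 * (norm (u-x))\<^sup>2 \<le> f u"
    by (simp add: v_def N_def)
qed

lemma conv_grad:
  fixes f :: "'a::euclidean_space \<Rightarrow> real"
  assumes cvx: "convex_on UNIV f"
    and grad: "\<And>x. (f has_derivative (\<lambda>h. df x \<bullet> h)) (at x)"
    and lip: "\<And>x y. norm (df x - df y) \<le> L * norm (x - y)"
    and L0: "L \<ge> 0"
  shows "f x + df x \<bullet> (w - x) \<le> f w"
proof -
  define N where "N = (norm (w - x))\<^sup>2"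
  have "f x + df x \<bullet> (w - x) - f w \<le> 0"
  proof (rule eps_le0[of "L/2 * N"])
    show "0 \<le> L/2 * N" using L0 by (simp add: N_def)
    fix s :: real assume s: "0 < s" "s \<le> 1"
    have p: "x + s *\<^sub>R (w - x) = (1 - s) *\<^sub>R x + s *\<^sub>R w" by (simp add: algebra_simps)
    have c1: "f (x + s *\<^sub>R (w - x)) \<le> (1 - s) * f x + s * f w"
      unfolding p using s by (intro convex_onD[OF cvx]) auto
    have c2: "f x + df x \<bullet> (x + s *\<^sub>R (w - x) - x) - L/2 * (norm (x + s *\<^sub>R (w - x) - x))\<^sup>2 \<le> f (x + s *\<^sub>R (w - x))"
      by (rule descent(2)[OF grad lip])
    have e1: "df x \<bullet> (x + s *\<^sub>R (w - x) - x) = s * (df x \<bullet> (w - x))" by simp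
    have e2: "(norm (x + s *\<^sub>R (w - x) - x))\<^sup>2 = s\<^sup>2 * N"
      using s by (simp add: N_def power_mult_distrib)
    from c1 c2 e1 e2 have "s * (f x + df x \<bullet> (w - x) - f w) \<le> s * (s * (L/2 * N))"
      by (simp add: algebra_simps power2_eq_square)
    then show "f x + df x \<bullet> (w - x) - f w \<le> s * (L/2 * N)"
      using s by simp
  qed
  then show ?thesis by simp
qed

lemma cocoer:
  fixes f :: "'a::euclidean_space \<Rightarrow> real"
  assumes cvx: "convex_on UNIV f"
    and grad: "\<And>x. (f has_derivative (\<lambda>h. df x \<bullet> h)) (at x)"
    and lip: "\<And>x y. norm (df x - df y) \<le> L * norm (x - y)"
    and L0: "L > 0"
  shows "(norm (df x - df y))\<^sup>2 \<le> 2 * L * (f x - f y - df y \<bullet> (x - y))"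
proof -
  define d where "d = df x - df y"
  define w where "w = x - (1/L) *\<^sub>R d"
  have a: "f y + df y \<bullet> (w - y) \<le> f w" using conv_grad[OF cvx grad lip] L0 by simp
  have b: "f w \<le> f x + df x \<bullet> (w - x) + L/2 * (norm (w-x))\<^sup>2" by (rule descent(1)[OF grad lip])
  have e1: "df y \<bullet> (w - y) = df y \<bullet> (x - y) - (1/L) * (df y \<bullet> d)"
    by (simp add: w_def inner_diff_right algebra_simps)
  have e2: "df x \<bullet> (w - x) = - (1/L) * (df x \<bullet> d)" by (simp add: w_def)
  have e3: "(norm (w-x))\<^sup>2 = (1/L)\<^sup>2 * (norm d)\<^sup>2"
    using L0 by (simp add: w_def power_mult_distrib power_divide)
  have e4: "df x \<bullet> d - df y \<bullet> d = (norm d)\<^sup>2"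
    by (simp add: d_def power2_norm_eq_inner inner_diff_left)
  from a b e1 e2 e3 have "(1/L) * (df x \<bullet> d - df y \<bullet> d) - L/2 * (1/L)\<^sup>2 * (norm d)\<^sup>2 \<le> f x - f y - df y \<bullet> (x - y)"
    by (simp add: algebra_simps)
  with e4 have "(1/L) * (norm d)\<^sup>2 - L/2 * (1/L)\<^sup>2 * (norm d)\<^sup>2 \<le> f x - f y - df y \<bullet> (x - y)" by simp
  moreover have "(1/L) * (norm d)\<^sup>2 - L/2 * (1/L)\<^sup>2 * (norm d)\<^sup>2 = (norm d)\<^sup>2 / (2*L)"
    using L0 by (simp add: field_simps power2_eq_square)
  ultimately have "(norm d)\<^sup>2 / (2*L) \<le> f x - f y - df y \<bullet> (x - y)" by simp
  then show ?thesis using L0 by (simp add: d_def field_simps)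
qed

lemma prox_min:
  fixes phi :: "'a::euclidean_space \<Rightarrow> real"
  assumes lipc: "c-lipschitz_on UNIV phi"
  shows "phi (prox phi y) + (1/2) * (norm (y - prox phi y))\<^sup>2 \<le> phi w + (1/2) * (norm (y - w))\<^sup>2"
proof -
  define psi where "psi = (\<lambda>w. phi w + (1/2) * (norm (y - w))\<^sup>2)"
  have c0: "c \<ge> 0" using lipc by (simp add: lipschitz_on_def)
  have cphi: "continuous_on UNIV phi" by (rule lipschitz_on_continuous_on[OF lipc])
  have cpsi: "continuous_on (cball y (2*c+1)) psi"
    unfolding psi_def
    by (intro continuous_intros continuous_on_subset[OF cphi]) auto
  obtain u where u: "u \<in> cball y (2*c+1)" "\<And>w. w \<in> cball y (2*c+1) \<Longrightarrow> psi u \<le> psi w"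
    using continuous_attains_inf[OF compact_cball _ cpsi] c0 by fastforce
  have all: "psi u \<le> psi w" for w
  proof (cases "w \<in> cball y (2*c+1)")
    case True then show ?thesis using u by blast
  next
    case False
    define r where "r = norm (y - w)"
    have r: "r \<ge> 2*c" using False by (simp add: r_def dist_norm)
    have "dist (phi w) (phi y) \<le> c * dist w y" by (rule lipschitz_onD[OF lipc]) auto
    then have "phi w \<ge> phi y - c * r" by (simp add: dist_real_def r_def dist_norm norm_minus_commute)
    moreover have "0 \<le> r * (r - 2*c)" using r c0 by simp
    ultimately have "psi w \<ge> psi y" by (simp add: psi_def r_def[symmetric] algebra_simps power2_eq_square)
    moreover have "psi u \<le> psi y" using u c0 by simp
    ultimately show ?thesis by simp
  qed
  have "\<exists>z. \<forall>w. phi z + (1/2) * (norm (y - z))\<^sup>2 \<le> phi w + (1/2) * (norm (y - w))\<^sup>2"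
    using all unfolding psi_def by blast
  from someI_ex[OF this] show ?thesis unfolding prox_def by blast
qed

lemma prox_fo:
  fixes phi :: "'a::euclidean_space \<Rightarrow> real"
  assumes lipc: "c-lipschitz_on UNIV phi" and cvx: "convex_on UNIV phi"
  shows "(y - prox phi y) \<bullet> (w - prox phi y) \<le> phi w - phi (prox phi y)"
proof -
  define u where "u = prox phi y"
  define N where "N = (norm (w - u))\<^sup>2"
  have "phi u - phi w + (y - u) \<bullet> (w - u) \<le> 0"
  proof (rule eps_le0[of "N/2"])
    show "0 \<le> N/2" by (simp add: N_def)
    fix s :: real assume s: "0 < s" "s \<le> 1"
    have p: "u + s *\<^sub>R (w - u) = (1 - s) *\<^sub>R u + s *\<^sub>R w" by (simp add: algebra_simps)
    have c1: "phi (u + s *\<^sub>R (w - u)) \<le> (1 - s) * phi u + s * phi w"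
      unfolding p using s by (intro convex_onD[OF cvx]) auto
    have m: "phi u + (1/2) * (norm (y - u))\<^sup>2 \<le> phi (u + s *\<^sub>R (w - u)) + (1/2) * (norm (y - (u + s *\<^sub>R (w - u))))\<^sup>2"
      unfolding u_def by (rule prox_min[OF lipc])
    have e: "(norm (y - (u + s *\<^sub>R (w - u))))\<^sup>2 = (norm (y - u))\<^sup>2 - 2 * s * ((y - u) \<bullet> (w - u)) + s\<^sup>2 * N"
    proof -
      have "(norm (y - (u + s *\<^sub>R (w - u))))\<^sup>2 = (norm ((y - u) - s *\<^sub>R (w - u)))\<^sup>2"
        by (simp add: algebra_simps)
      also have "\<dots> = (norm (y-u))\<^sup>2 - 2*((y-u) \<bullet> (s *\<^sub>R (w-u))) + (norm (s *\<^sub>R (w-u)))\<^sup>2"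
        by (rule nsq)
      also have "\<dots> = (norm (y - u))\<^sup>2 - 2 * s * ((y - u) \<bullet> (w - u)) + s\<^sup>2 * N"
        by (simp add: N_def power_mult_distrib)
      finally show ?thesis .
    qed
    from c1 m e have "s * (phi u - phi w + (y - u) \<bullet> (w - u)) \<le> s * (s * (N/2))"
      by (simp add: algebra_simps power2_eq_square)
    then show "phi u - phi w + (y - u) \<bullet> (w - u) \<le> s * (N/2)" using s by simp
  qed
  then show ?thesis by (simp add: u_def)
qed

lemma prox_nonexp:
  fixes phi :: "'a::euclidean_space \<Rightarrow> real"
  assumes lipc: "c-lipschitz_on UNIV phi" and cvx: "convex_on UNIV phi"
  shows "norm (prox phi y1 - prox phi y2) \<le> norm (y1 - y2)"
proof -
  define u1 where "u1 = prox phi y1"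
  define u2 where "u2 = prox phi y2"
  have a: "(y1 - u1) \<bullet> (u2 - u1) \<le> phi u2 - phi u1" unfolding u1_def by (rule prox_fo[OF lipc cvx])
  have b: "(y2 - u2) \<bullet> (u1 - u2) \<le> phi u1 - phi u2" unfolding u2_def by (rule prox_fo[OF lipc cvx])
  have "(norm (u1 - u2))\<^sup>2 \<le> (y1 - y2) \<bullet> (u1 - u2)"
    using add_mono[OF a b] by (simp add: power2_norm_eq_inner inner_diff_left inner_diff_right inner_commute algebra_simps)
  also have "\<dots> \<le> norm (y1 - y2) * norm (u1 - u2)" by (rule Cauchy_Schwarz_ineq2[THEN abs_le_D1])
  finally have "norm (u1 - u2) * norm (u1 - u2) \<le> norm (y1 - y2) * norm (u1 - u2)"
    by (simp add: power2_eq_square)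
  then have "norm (u1 - u2) \<le> norm (y1 - y2)"
    by (cases "norm (u1 - u2) = 0") (auto simp: mult_le_cancel_right)
  then show ?thesis by (simp add: u1_def u2_def)
qed

lemma scal:
  fixes tau L M w e :: real
  assumes "tau > 0" "4 * tau * L < 1" "e \<ge> 0"
  shows "w * e + L/2 * e\<^sup>2 + 2 * M * e - e\<^sup>2 / (2 * tau) \<le> tau * w\<^sup>2 + 8 * tau * M\<^sup>2"
proof -
  have a: "0 \<le> (2*tau*w - e)\<^sup>2" by simp
  have b: "0 \<le> (8*tau*M - e)\<^sup>2" by simp
  have c: "(4*tau*L)*e\<^sup>2 \<le> 1 * e\<^sup>2" using assms(2) by (intro mult_right_mono) auto
  have "8*tau*(w * e + L/2 * e\<^sup>2 + 2 * M * e - e\<^sup>2 / (2 * tau)) \<le> 8*tau*(tau * w\<^sup>2 + 8 * tau * M\<^sup>2)"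
    using a b c assms(1) by (simp add: algebra_simps power2_eq_square)
  then show ?thesis using assms(1) by simp
qed

lemma pointwise:
  fixes x z u d dFx :: "'a::euclidean_space" and tau L Lg m Fu Fx Fz gju gjz gjx Gu Gx Gz :: real
  assumes tau: "tau > 0" "4 * tau * L < 1"
    and P1: "(x - tau *\<^sub>R d - u) \<bullet> (z - u) \<le> tau * m * gjz - tau * m * gju"
    and P2: "Fu \<le> Fx + dFx \<bullet> (u - x) + L/2 * (norm (u-x))\<^sup>2"
    and P3: "Fx \<le> Fz + dFx \<bullet> (x - z)"
    and P4: "Gu \<le> Gx - m*gjx + m*gju + 2*(m*Lg)*norm(u-x)"
  shows "(Fu + Gu) - (Fz + Gz) \<le> 1/(2*tau) * ((norm (x-z))\<^sup>2 - (norm (u - z))\<^sup>2)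
      + tau*(norm (dFx - d))\<^sup>2 + (dFx - d) \<bullet> (x - z) + (Gx - m*gjx) - (Gz - m*gjz) + 8*tau*(m*Lg)\<^sup>2"
proof -
  define e where "e = norm (u - x)"
  define X where "X = (norm (x-z))\<^sup>2"
  define Y where "Y = (norm (u-z))\<^sup>2"
  have pol: "X = e\<^sup>2 - 2*((x-u) \<bullet> (z-u)) + Y"
  proof -
    have "X = (norm ((x-u) - (z-u)))\<^sup>2" by (simp add: X_def)
    also have "\<dots> = (norm (x-u))\<^sup>2 - 2*((x-u) \<bullet> (z-u)) + (norm (z-u))\<^sup>2" by (rule nsq)
    finally show ?thesis by (simp add: e_def Y_def norm_minus_commute)
  qed
  have P1e: "(x-u) \<bullet> (z-u) - tau*(d \<bullet> (z-u)) \<le> tau*m*gjz - tau*m*gju"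
    using P1 by (simp add: inner_diff_left)
  have pe: "(x-u) \<bullet> (z-u) = (e\<^sup>2 + Y - X)/2" using pol by simp
  have "tau*(m*gju) \<le> tau*(m*gjz) + (X - Y - e\<^sup>2)/2 + tau * (d \<bullet> (z-u))"
    using P1e unfolding pe by (simp add: mult.assoc field_simps)
  also have "\<dots> = tau * (m*gjz + (X - Y - e\<^sup>2)/(2*tau) + d \<bullet> (z-u))"
    using tau(1) by (simp add: distrib_left)
  finally have G1: "m*gju \<le> m*gjz + (X - Y - e\<^sup>2)/(2*tau) + d \<bullet> (z-u)"
    using tau(1) by simp
  have split: "dFx \<bullet> (u-x) + dFx \<bullet> (x-z) + d \<bullet> (z-u) = (dFx - d) \<bullet> (u-x) + (dFx - d) \<bullet> (x-z)"
    by (simp add: inner_diff_left inner_diff_right algebra_simps)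
  have CS: "(dFx - d) \<bullet> (u-x) \<le> norm (dFx - d) * e"
    unfolding e_def by (rule Cauchy_Schwarz_ineq2[THEN abs_le_D1])
  have SC: "norm (dFx - d) * e + L/2 * e\<^sup>2 + 2 * (m*Lg) * e - e\<^sup>2 / (2 * tau) \<le> tau * (norm (dFx - d))\<^sup>2 + 8 * tau * (m*Lg)\<^sup>2"
    by (rule scal[OF tau]) (simp add: e_def)
  have eq: "(X - Y - e\<^sup>2)/(2*tau) = 1/(2*tau) * (X - Y) - e\<^sup>2 / (2 * tau)"
    by (simp add: diff_divide_distrib)
  show ?thesis
    using P2 P3 P4 G1 split CS SC eq unfolding X_def[symmetric] Y_def[symmetric] e_def[symmetric]
    by linarith
qed



theorem lemma4p2:
  fixes D :: "'i measure"
    and f :: "'i \<Rightarrow> 'a::euclidean_space \<Rightarrow> real" and df :: "'i \<Rightarrow> 'a \<Rightarrow> 'a"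
    and F :: "'a \<Rightarrow> real" and dF :: "'a \<Rightarrow> 'a"
    and g :: "nat \<Rightarrow> 'a \<Rightarrow> real" and m :: nat
    and L Lg tau eps :: real and T t :: nat
    and x0 xs z :: 'a and "is" :: "nat \<Rightarrow> 'i" and js :: "nat \<Rightarrow> nat"
  assumes D: "prob_space D"
    and Lpos: "L > 0"
    and f_convex: "\<And>i. convex_on UNIV (f i)"
    and f_grad: "\<And>i x. (f i has_derivative (\<lambda>h. df i x \<bullet> h)) (at x)"
    and f_lip: "\<And>i x y. norm (df i x - df i y) \<le> L * norm (x - y)"
    and F_mean: "\<And>x. integrable D (\<lambda>i. f i x) \<and> F x = (\<integral>i. f i x \<partial>D)"
    and F_grad: "\<And>x. (F has_derivative (\<lambda>h. dF x \<bullet> h)) (at x)"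
    and dF_mean: "\<And>x. integrable D (\<lambda>i. df i x) \<and> (\<integral>i. df i x \<partial>D) = dF x"
    and m_pos: "m \<ge> 1"
    and g_convex: "\<And>j. j < m \<Longrightarrow> convex_on UNIV (g j)"
    and g_lip: "\<And>j. j < m \<Longrightarrow> Lg-lipschitz_on UNIV (g j)"
    and xs_min: "\<And>y. hfun F g m xs \<le> hfun F g m y"
    and sigma_fin: "integrable D (\<lambda>i. (norm (df i xs))\<^sup>2)"
    and T: "T \<ge> 1" and t: "t \<le> T"
    and tau: "tau > 0" "tau < 1 / (4 * L)"
    and eps: "eps > 0"
  shows
    "let h = hfun F g m;
         hstar = h xs;
         sigma2 = (\<integral>i. (norm (df i xs))\<^sup>2 \<partial>D);
         a = 2 * tau * L * (1 + eps);
         v = (1 + 1 / eps) * sigma2 * tau;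
         x = ripm_iter df g m tau x0 is js t;
         step = ripm_step df g m tau x
     in (\<integral>i. (\<Sum>j<m. h (step i j) - h z - a * h x + a * hstar) / real m \<partial>D)
        \<le> 1 / (2 * tau) * (\<integral>i. (\<Sum>j<m. (norm (x - z))\<^sup>2 - (norm (step i j - z))\<^sup>2) / real m \<partial>D)
           + v + 8 * tau * (real m)\<^sup>2 * Lg\<^sup>2"
proof -
  interpret P: prob_space D by (rule D)
  define h where "h = hfun F g m"
  define hstar where "hstar = h xs"
  define sigma2 where "sigma2 = (\<integral>i. (norm (df i xs))\<^sup>2 \<partial>D)"
  define a where "a = 2 * tau * L * (1 + eps)"
  define v where "v = (1 + 1 / eps) * sigma2 * tau"
  define G where "G = (\<lambda>w. \<Sum>k<m. g k w)"
  have hG: "\<And>w. h w = F w + G w" by (simp add: h_def hfun_def G_def)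
  define x where "x = ripm_iter df g m tau x0 is js t"
  define Pr where "Pr = (\<lambda>j. prox (\<lambda>z. tau * real m * g j z))"
  define u where "u = (\<lambda>i j. Pr j (x - tau *\<^sub>R df i x))"
  have ustep: "\<And>i j. ripm_step df g m tau x i j = u i j" by (simp add: ripm_step_def u_def Pr_def)
  have mpos: "real m > 0" using m_pos by simp
  have tauL: "4 * tau * L < 1"
  proof -
    have "tau * (4 * L) < 1" using tau(2) Lpos by (simp add: field_simps)
    then show ?thesis by (simp add: algebra_simps)
  qed
  have Lg0: "Lg \<ge> 0" using g_lip[of 0] m_pos by (simp add: lipschitz_on_def)
  have philip: "(tau * real m * Lg)-lipschitz_on UNIV (\<lambda>z. tau * real m * g j z)" if "j < m" for j
    using lipschitz_on_cmult_real_nonneg[OF g_lip[OF that], of "tau * real m"] tau(1) by simp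
  have phicvx: "convex_on UNIV (\<lambda>z. tau * real m * g j z)" if "j < m" for j
    using convex_on_cmul[of "tau * real m" UNIV "g j"] g_convex[OF that] tau(1) by simp
  have intdf: "\<And>y. integrable D (\<lambda>i. df i y)" using dF_mean by blast
  have intf: "\<And>y. integrable D (\<lambda>i. f i y)" using F_mean by blast
  have dFlip: "norm (dF p - dF q) \<le> L * norm (p - q)" for p q
  proof -
    have "dF p - dF q = (\<integral>i. df i p - df i q \<partial>D)"
      using dF_mean[of p] dF_mean[of q] by (simp add: integral_diff)
    also have "norm \<dots> \<le> (\<integral>i. norm (df i p - df i q) \<partial>D)" by (rule integral_norm_bound)
    also have "\<dots> \<le> (\<integral>i. L * norm (p - q) \<partial>D)"
      by (rule integral_mono) (auto intro!: integrable_norm integrable_diff intdf f_lip)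
    also have "\<dots> = L * norm (p - q)" by (simp add: P.prob_space)
    finally show ?thesis .
  qed
  have Fconv: "F p + dF p \<bullet> (w - p) \<le> F w" for p w
  proof -
    have "(\<integral>i. f i p + df i p \<bullet> (w - p) \<partial>D) \<le> (\<integral>i. f i w \<partial>D)"
      by (rule integral_mono) (auto intro!: integrable_add intf intdf conv_grad[OF f_convex f_grad f_lip] simp: less_imp_le[OF Lpos])
    moreover have "(\<integral>i. f i p + df i p \<bullet> (w - p) \<partial>D) = F p + dF p \<bullet> (w - p)"
      using F_mean[of p] dF_mean[of p] by (simp add: integral_add intf intdf)
    ultimately show ?thesis using F_mean[of w] by simp
  qed
  have Fdesc: "F q \<le> F p + dF p \<bullet> (q - p) + L/2 * (norm (q-p))\<^sup>2" for p q
    by (rule descent(1)[OF F_grad dFlip])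
  have Gcvx: "G (p + s *\<^sub>R (w - p)) \<le> (1 - s) * G p + s * G w" if "0 \<le> s" "s \<le> 1" for p w s
  proof -
    have pp: "p + s *\<^sub>R (w - p) = (1 - s) *\<^sub>R p + s *\<^sub>R w" by (simp add: algebra_simps)
    have "G (p + s *\<^sub>R (w - p)) \<le> (\<Sum>k<m. (1 - s) * g k p + s * g k w)"
      unfolding G_def pp using that by (intro sum_mono convex_onD[OF g_convex]) auto
    also have "\<dots> = (1 - s) * G p + s * G w" by (simp add: G_def sum.distrib sum_distrib_left)
    finally show ?thesis .
  qed
  have opt: "G xs - G w - dF xs \<bullet> (w - xs) \<le> 0" for w
  proof (rule eps_le0[of "L/2 * (norm (w - xs))\<^sup>2"])
    show "0 \<le> L/2 * (norm (w - xs))\<^sup>2" using Lpos by simp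
    fix s :: real assume s: "0 < s" "s \<le> 1"
    have m1: "h xs \<le> h (xs + s *\<^sub>R (w - xs))" by (simp add: h_def xs_min)
    have m2: "F (xs + s *\<^sub>R (w - xs)) \<le> F xs + s * (dF xs \<bullet> (w - xs)) + s * (s * (L/2 * (norm (w - xs))\<^sup>2))"
    proof -
      have e1: "(norm (xs + s *\<^sub>R (w - xs) - xs))\<^sup>2 = s\<^sup>2 * (norm (w - xs))\<^sup>2"
        using s by (simp add: power_mult_distrib)
      have e2: "dF xs \<bullet> (xs + s *\<^sub>R (w - xs) - xs) = s * (dF xs \<bullet> (w - xs))" by simp
      show ?thesis using Fdesc[of "xs + s *\<^sub>R (w - xs)" xs] unfolding e1 e2
        by (simp add: power2_eq_square algebra_simps)
    qed
    have m3: "G (xs + s *\<^sub>R (w - xs)) \<le> (1 - s) * G xs + s * G w" using Gcvx s by simp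
    from m1 m2 m3 have "s * (G xs - G w - dF xs \<bullet> (w - xs)) \<le> s * (s * (L/2 * (norm (w - xs))\<^sup>2))"
      unfolding hG by (simp add: algebra_simps)
    then show "G xs - G w - dF xs \<bullet> (w - xs) \<le> s * (L/2 * (norm (w - xs))\<^sup>2)" using s by simp
  qed

  have coc: "(norm (df i x - df i xs))\<^sup>2 \<le> 2*L*(f i x - f i xs - df i xs \<bullet> (x - xs))" for i
    by (rule cocoer[OF f_convex f_grad f_lip Lpos])
  have young: "(norm (df i x))\<^sup>2 \<le> (1+eps)*(norm (df i x - df i xs))\<^sup>2 + (1+1/eps)*(norm (df i xs))\<^sup>2" for i
  proof -
    define p where "p = df i x - df i xs"
    define q where "q = df i xs"
    have "(norm (df i x))\<^sup>2 = (norm (p + q))\<^sup>2" by (simp add: p_def q_def)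
    also have "\<dots> = (norm p)\<^sup>2 + 2 * (p \<bullet> q) + (norm q)\<^sup>2"
      by (simp add: power2_norm_eq_inner inner_add_left inner_add_right inner_commute)
    also have "2 * (p \<bullet> q) \<le> eps * (norm p)\<^sup>2 + (norm q)\<^sup>2 / eps"
    proof -
      have "p \<bullet> q \<le> norm p * norm q" by (rule Cauchy_Schwarz_ineq2[THEN abs_le_D1])
      moreover have "0 \<le> (eps * norm p - norm q)\<^sup>2" by simp
      then have "eps * (2 * (norm p * norm q)) \<le> eps * (eps * (norm p)\<^sup>2 + (norm q)\<^sup>2 / eps)"
        using eps by (simp add: algebra_simps power2_eq_square)
      then have "2 * (norm p * norm q) \<le> eps * (norm p)\<^sup>2 + (norm q)\<^sup>2 / eps"
        using eps by simp
      ultimately show ?thesis by linarith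
    qed
    then have "(norm p)\<^sup>2 + 2 * (p \<bullet> q) + (norm q)\<^sup>2 \<le> (1+eps)*(norm p)\<^sup>2 + (1+1/eps)*(norm q)\<^sup>2"
      by (simp add: algebra_simps)
    finally show ?thesis by (simp add: p_def q_def)
  qed
  have P4: "G (u i j) \<le> G x - real m * g j x + real m * g j (u i j) + 2 * (real m * Lg) * norm (u i j - x)"
    if j: "j < m" for i j
  proof -
    have l: "\<bar>g k (u i j) - g k x\<bar> \<le> Lg * norm (u i j - x)" if "k < m" for k
      using lipschitz_onD[OF g_lip[OF that], of "u i j" x] by (simp add: dist_real_def dist_norm)
    have "G (u i j) - G x = (\<Sum>k<m. g k (u i j) - g k x)" by (simp add: G_def sum_subtractf)
    also have "\<dots> \<le> (\<Sum>k<m. Lg * norm (u i j - x))"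
      by (intro sum_mono) (use l in force)
    also have "\<dots> = real m * Lg * norm (u i j - x)" by simp
    finally have "G (u i j) - G x \<le> real m * Lg * norm (u i j - x)" .
    moreover have "real m * (g j x - g j (u i j)) \<le> real m * (Lg * norm (u i j - x))"
      using l[OF j] by (intro mult_left_mono) auto
    ultimately show ?thesis by (simp add: algebra_simps)
  qed
  have pw: "h (u i j) - h z \<le> 1/(2*tau) * ((norm (x-z))\<^sup>2 - (norm (u i j - z))\<^sup>2)
      + tau*(norm (dF x - df i x))\<^sup>2 + (dF x - df i x) \<bullet> (x - z) + (G x - real m*g j x) - (G z - real m*g j z) + 8*tau*(real m*Lg)\<^sup>2"
    if j: "j < m" for i j
  proof -
    have P1: "(x - tau *\<^sub>R df i x - u i j) \<bullet> (z - u i j) \<le> tau * real m * g j z - tau * real m * g j (u i j)"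
      unfolding u_def Pr_def using prox_fo[OF philip[OF j] phicvx[OF j], of "x - tau *\<^sub>R df i x" z] by simp
    have P3: "F x \<le> F z + dF x \<bullet> (x - z)"
      using Fconv[of x z] by (simp add: inner_diff_right)
    show ?thesis unfolding hG
      by (rule pointwise[OF tau(1) tauL P1 Fdesc P3 P4[OF j]])
  qed

  define X where "X = (norm (x - z))\<^sup>2"
  define c0 where "c0 = hstar - h z - a*h x + a*hstar"
  define C where "C = 8*tau*(real m*Lg)\<^sup>2 - a*h x + a*hstar"
  define Q where "Q = (\<lambda>i. tau*((1+eps)*(2*L*(f i x - f i xs - df i xs \<bullet> (x - xs))) + (1+1/eps)*(norm(df i xs))\<^sup>2
      - 2*(dF x \<bullet> df i x) + (norm (dF x))\<^sup>2) + (dF x \<bullet> (x - z) - df i x \<bullet> (x - z)))"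
  define A where "A = (\<lambda>i. (\<Sum>j<m. h (u i j) - h z - a*h x + a*hstar)/real m)"
  define B where "B = (\<lambda>i. (\<Sum>j<m. (norm (x - z))\<^sup>2 - (norm (u i j - z))\<^sup>2)/real m)"
  have Qb: "tau*(norm (dF x - df i x))\<^sup>2 + (dF x - df i x) \<bullet> (x - z) \<le> Q i" for i
  proof -
    have n: "(norm (dF x - df i x))\<^sup>2 = (norm (dF x))\<^sup>2 - 2*(dF x \<bullet> df i x) + (norm (df i x))\<^sup>2" by (rule nsq)
    have "(norm (df i x))\<^sup>2 \<le> (1+eps)*(2*L*(f i x - f i xs - df i xs \<bullet> (x - xs))) + (1+1/eps)*(norm(df i xs))\<^sup>2"
      using young[of i] mult_left_mono[OF coc[of i], of "1+eps"] eps by linarith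
    then have "tau*(norm (dF x - df i x))\<^sup>2 \<le> tau*((1+eps)*(2*L*(f i x - f i xs - df i xs \<bullet> (x - xs))) + (1+1/eps)*(norm(df i xs))\<^sup>2
      - 2*(dF x \<bullet> df i x) + (norm (dF x))\<^sup>2)"
      unfolding n using tau(1) by (intro mult_left_mono) auto
    then show ?thesis by (simp add: Q_def inner_diff_left)
  qed
  have S0: "(\<Sum>j<m. (G x - real m*g j x) - (G z - real m*g j z)) = 0"
    by (simp add: sum_subtractf sum_distrib_left[symmetric] G_def)
  have AB: "A i \<le> 1/(2*tau) * B i + Q i + C" for i
  proof -
    have "(\<Sum>j<m. h (u i j) - h z - a*h x + a*hstar) \<le> (\<Sum>j<m. 1/(2*tau)*((norm (x-z))\<^sup>2 - (norm (u i j - z))\<^sup>2) + (Q i + C)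
        + ((G x - real m*g j x) - (G z - real m*g j z)))"
    proof (rule sum_mono)
      fix j assume "j \<in> {..<m}"
      then have j: "j < m" by simp
      show "h (u i j) - h z - a*h x + a*hstar \<le> 1/(2*tau)*((norm (x-z))\<^sup>2 - (norm (u i j - z))\<^sup>2) + (Q i + C)
        + ((G x - real m*g j x) - (G z - real m*g j z))"
        using pw[OF j, of i] Qb[of i] unfolding C_def by linarith
    qed
    also have "\<dots> = 1/(2*tau) * (\<Sum>j<m. (norm (x-z))\<^sup>2 - (norm (u i j - z))\<^sup>2) + real m * (Q i + C)"
      by (simp add: sum.distrib sum_distrib_left S0)
    finally have "A i * real m \<le> (1/(2*tau) * B i + Q i + C) * real m"
      using mpos by (simp add: A_def B_def algebra_simps)
    then show ?thesis using mpos by simp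
  qed
  have Alow: "c0 \<le> A i" for i
  proof -
    have "(\<Sum>j<m. c0) \<le> (\<Sum>j<m. h (u i j) - h z - a*h x + a*hstar)"
      by (intro sum_mono) (simp add: c0_def hstar_def h_def xs_min)
    then have "c0 * real m \<le> A i * real m" using mpos by (simp add: A_def mult.commute)
    then show ?thesis using mpos by simp
  qed
  have Bup: "B i \<le> X" for i
  proof -
    have "(\<Sum>j<m. (norm (x - z))\<^sup>2 - (norm (u i j - z))\<^sup>2) \<le> (\<Sum>j<m. X)"
      by (intro sum_mono) (simp add: X_def)
    then have "B i * real m \<le> X * real m" using mpos by (simp add: B_def mult.commute)
    then show ?thesis using mpos by simp
  qed

  have contPr: "continuous_on UNIV (Pr j)" if j: "j < m" for j
  proof -
    have "1-lipschitz_on UNIV (Pr j)"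
      by (rule lipschitz_onI) (auto simp: dist_norm Pr_def intro: prox_nonexp[OF philip[OF j] phicvx[OF j]])
    then show ?thesis by (rule lipschitz_on_continuous_on)
  qed
  have conth: "continuous_on UNIV h"
  proof -
    have cF: "continuous_on UNIV F"
      by (intro continuous_at_imp_continuous_on ballI has_derivative_continuous[OF F_grad])
    have cg: "continuous_on UNIV (g k)" if "k < m" for k
      by (rule lipschitz_on_continuous_on[OF g_lip[OF that]])
    have "continuous_on UNIV (\<lambda>w. F w + (\<Sum>k<m. g k w))"
      by (intro continuous_intros cF cg) auto
    then show ?thesis by (simp add: h_def hfun_def)
  qed
  have measy: "(\<lambda>i. x - tau *\<^sub>R df i x) \<in> borel_measurable D"
    using borel_measurable_integrable[OF intdf[of x]] by measurable
  have meas_hu: "(\<lambda>i. h (u i j)) \<in> borel_measurable D" if j: "j < m" for j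
  proof -
    have "continuous_on UNIV (\<lambda>v. h (Pr j v))"
      using continuous_on_compose[OF contPr[OF j] continuous_on_subset[OF conth]] by (simp add: o_def)
    from measurable_compose[OF measy borel_measurable_continuous_onI[OF this]]
    show ?thesis by (simp add: u_def)
  qed
  have meas_nu: "(\<lambda>i. (norm (u i j - z))\<^sup>2) \<in> borel_measurable D" if j: "j < m" for j
  proof -
    have "continuous_on UNIV (\<lambda>v. (norm (Pr j v - z))\<^sup>2)"
      by (intro continuous_intros contPr[OF j])
    from measurable_compose[OF measy borel_measurable_continuous_onI[OF this]]
    show ?thesis by (simp add: u_def)
  qed
  have measA: "A \<in> borel_measurable D"
    unfolding A_def
    by (intro borel_measurable_divide borel_measurable_sum borel_measurable_add borel_measurable_diff
        borel_measurable_const meas_hu) auto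
  have measB: "B \<in> borel_measurable D"
    unfolding B_def
    by (intro borel_measurable_divide borel_measurable_sum borel_measurable_diff
        borel_measurable_const meas_nu) auto
  have intQ: "integrable D Q"
  proof -
    have i1: "integrable D (\<lambda>i. f i x - f i xs - df i xs \<bullet> (x - xs))"
      using intf intdf by auto
    have i2: "integrable D (\<lambda>i. (1 + eps) * (2 * L * (f i x - f i xs - df i xs \<bullet> (x - xs))) +
            (1 + 1 / eps) * (norm (df i xs))\<^sup>2 - 2 * (dF x \<bullet> df i x) + (norm (dF x))\<^sup>2)"
      using i1 sigma_fin intdf by auto
    have i3: "integrable D (\<lambda>i. dF x \<bullet> (x - z) - df i x \<bullet> (x - z))"
      using intdf by auto
    show ?thesis unfolding Q_def using i2 i3 by auto
  qed
  have intA: "integrable D A"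
  proof (rule Bochner_Integration.integrable_bound[OF _ measA])
    show "integrable D (\<lambda>i. \<bar>c0\<bar> + \<bar>1/(2*tau) * X\<bar> + \<bar>Q i\<bar> + \<bar>C\<bar>)"
      by (auto intro!: integrable_add integrable_abs intQ P.integrable_const)
    show "AE i in D. norm (A i) \<le> norm (\<bar>c0\<bar> + \<bar>1/(2*tau) * X\<bar> + \<bar>Q i\<bar> + \<bar>C\<bar>)"
    proof (rule AE_I2)
      fix i
      have "1/(2*tau) * B i \<le> 1/(2*tau) * X" using Bup[of i] tau(1) by (intro mult_left_mono) auto
      moreover have e: "\<bar>1/(2*tau) * X\<bar> = 1/(2*tau) * X" using tau(1) by (simp add: X_def)
      moreover have "\<bar>A i\<bar> \<le> \<bar>c0\<bar> + \<bar>1/(2*tau) * X\<bar> + \<bar>Q i\<bar> + \<bar>C\<bar>"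
        using AB[of i] Alow[of i] calculation abs_ge_self[of c0] abs_ge_minus_self[of c0]
          abs_ge_self[of "Q i"] abs_ge_minus_self[of "Q i"] abs_ge_self[of C] abs_ge_minus_self[of C]
        unfolding abs_le_iff by linarith
      ultimately show "norm (A i) \<le> norm (\<bar>c0\<bar> + \<bar>1/(2*tau) * X\<bar> + \<bar>Q i\<bar> + \<bar>C\<bar>)"
        by simp
    qed
  qed
  have intB: "integrable D B"
  proof (rule Bochner_Integration.integrable_bound[OF _ measB])
    show "integrable D (\<lambda>i. \<bar>X\<bar> + 2*tau*(\<bar>c0\<bar> + \<bar>Q i\<bar> + \<bar>C\<bar>))"
    proof -
      have "integrable D (\<lambda>i. \<bar>Q i\<bar>)" using intQ by auto
      then have "integrable D (\<lambda>i. \<bar>c0\<bar> + \<bar>Q i\<bar> + \<bar>C\<bar>)" by auto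
      then have "integrable D (\<lambda>i. 2 * tau * (\<bar>c0\<bar> + \<bar>Q i\<bar> + \<bar>C\<bar>))" by auto
      then show ?thesis by auto
    qed
    show "AE i in D. norm (B i) \<le> norm (\<bar>X\<bar> + 2*tau*(\<bar>c0\<bar> + \<bar>Q i\<bar> + \<bar>C\<bar>))"
    proof (rule AE_I2)
      fix i
      have "2*tau*(A i - Q i - C) \<le> 2*tau*(1/(2*tau) * B i)"
        using AB[of i] tau(1) by (intro mult_left_mono) auto
      then have lo: "2*tau*(A i - Q i - C) \<le> B i" using tau(1) by simp
      have "2*tau*(c0 - \<bar>Q i\<bar> - \<bar>C\<bar>) \<le> 2*tau*(A i - Q i - C)"
        using Alow[of i] tau(1) by (intro mult_left_mono) auto
      note lo2 = order_trans[OF this lo]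
      have s1: "0 \<le> 2*tau*(c0 + \<bar>c0\<bar>)" using tau(1) by simp
      have s2: "2*tau*(c0 - \<bar>Q i\<bar> - \<bar>C\<bar>) + 2*tau*(\<bar>c0\<bar> + \<bar>Q i\<bar> + \<bar>C\<bar>) = 2*tau*(c0 + \<bar>c0\<bar>)"
        by (simp add: algebra_simps)
      have s3: "0 \<le> 2*tau*(\<bar>c0\<bar> + \<bar>Q i\<bar> + \<bar>C\<bar>)" using tau(1) by simp
      have "X \<ge> 0" by (simp add: X_def)
      then have X0: "\<bar>X\<bar> = X" by simp
      have b1: "B i \<le> X + 2*tau*(\<bar>c0\<bar> + \<bar>Q i\<bar> + \<bar>C\<bar>)"
        using Bup[of i] s3 by linarith
      have b2: "- B i \<le> X + 2*tau*(\<bar>c0\<bar> + \<bar>Q i\<bar> + \<bar>C\<bar>)"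
        using lo2 s1 s2 \<open>X \<ge> 0\<close> by linarith
      have "\<bar>B i\<bar> \<le> \<bar>X\<bar> + 2*tau*(\<bar>c0\<bar> + \<bar>Q i\<bar> + \<bar>C\<bar>)"
        unfolding X0 using b1 b2 by (simp only: abs_le_iff)
      then show "norm (B i) \<le> norm (\<bar>X\<bar> + 2*tau*(\<bar>c0\<bar> + \<bar>Q i\<bar> + \<bar>C\<bar>))"
        using tau(1) by simp
    qed
  qed

  have intR: "integrable D (\<lambda>i. 1/(2*tau) * B i + Q i + C)" using intB intQ by auto
  have I1: "(\<integral>i. A i \<partial>D) \<le> (\<integral>i. 1/(2*tau) * B i + Q i + C \<partial>D)"
    by (rule integral_mono[OF intA intR AB])
  have I2: "(\<integral>i. 1/(2*tau) * B i + Q i + C \<partial>D) = 1/(2*tau) * (\<integral>i. B i \<partial>D) + (\<integral>i. Q i \<partial>D) + C"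
    using intB intQ by (simp add: P.prob_space)
  have Fi: "\<And>y. (\<integral>i. f i y \<partial>D) = F y" using F_mean by simp
  have dFi: "\<And>y. (\<integral>i. df i y \<partial>D) = dF y" using dF_mean by simp
  have IQ: "(\<integral>i. Q i \<partial>D) = tau*((1+eps)*(2*L*(F x - F xs - dF xs \<bullet> (x - xs))) + (1+1/eps)* sigma2
      - 2*(dF x \<bullet> dF x) + (norm (dF x))\<^sup>2) + (dF x \<bullet> (x - z) - dF x \<bullet> (x - z))"
  proof -
    have i1: "integrable D (\<lambda>i. f i x - f i xs - df i xs \<bullet> (x - xs))"
      using intf intdf by auto
    have j1: "(\<integral>i. f i x - f i xs - df i xs \<bullet> (x - xs) \<partial>D) = F x - F xs - dF xs \<bullet> (x - xs)"
      using intf intdf by (simp add: Fi dFi)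
    have i2: "integrable D (\<lambda>i. (1 + eps) * (2 * L * (f i x - f i xs - df i xs \<bullet> (x - xs))))"
      using i1 by auto
    have j2: "(\<integral>i. (1 + eps) * (2 * L * (f i x - f i xs - df i xs \<bullet> (x - xs))) \<partial>D)
        = (1 + eps) * (2 * L * (F x - F xs - dF xs \<bullet> (x - xs)))"
      using j1 by simp
    have j3: "(\<integral>i. (1 + eps) * (2 * L * (f i x - f i xs - df i xs \<bullet> (x - xs))) +
            (1 + 1 / eps) * (norm (df i xs))\<^sup>2 - 2 * (dF x \<bullet> df i x) + (norm (dF x))\<^sup>2 \<partial>D)
       = (1+eps)*(2*L*(F x - F xs - dF xs \<bullet> (x - xs))) + (1+1/eps)* sigma2 - 2*(dF x \<bullet> dF x) + (norm (dF x))\<^sup>2"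
      using i2 sigma_fin intdf j2 by (simp add: dFi sigma2_def P.prob_space)
    have i3: "integrable D (\<lambda>i. (1 + eps) * (2 * L * (f i x - f i xs - df i xs \<bullet> (x - xs))) +
            (1 + 1 / eps) * (norm (df i xs))\<^sup>2 - 2 * (dF x \<bullet> df i x) + (norm (dF x))\<^sup>2)"
      using i2 sigma_fin intdf by auto
    have j4: "(\<integral>i. dF x \<bullet> (x - z) - df i x \<bullet> (x - z) \<partial>D) = dF x \<bullet> (x - z) - dF x \<bullet> (x - z)"
      using intdf by (simp add: dFi P.prob_space)
    have i4: "integrable D (\<lambda>i. dF x \<bullet> (x - z) - df i x \<bullet> (x - z))" using intdf by auto
    show ?thesis unfolding Q_def using i3 i4 j3 j4 by simp
  qed
  have opt': "F x - F xs - dF xs \<bullet> (x - xs) \<le> h x - hstar" using opt[of x] by (simp add: hstar_def hG)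
  have a0: "a \<ge> 0" using tau Lpos eps by (simp add: a_def)
  have ea: "tau*((1+eps)*(2*L*(F x - F xs - dF xs \<bullet> (x - xs)))) = a * (F x - F xs - dF xs \<bullet> (x - xs))"
    by (simp add: a_def algebra_simps)
  have ma: "a * (F x - F xs - dF xs \<bullet> (x - xs)) \<le> a * (h x - hstar)" by (rule mult_left_mono[OF opt' a0])
  have nn: "dF x \<bullet> dF x = (norm (dF x))\<^sup>2" by (simp add: power2_norm_eq_inner)
  have ev: "tau * ((1+1/eps)* sigma2) = v" by (simp add: v_def)
  have IQb: "(\<integral>i. Q i \<partial>D) \<le> a * (h x - hstar) + v"
  proof -
    have "(\<integral>i. Q i \<partial>D) = tau*((1+eps)*(2*L*(F x - F xs - dF xs \<bullet> (x - xs)))) + tau * ((1+1/eps)* sigma2)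
        - tau * (norm (dF x))\<^sup>2"
      unfolding IQ nn by (simp add: algebra_simps)
    also have "\<dots> \<le> a * (h x - hstar) + v" unfolding ea ev
      using ma mult_nonneg_nonneg[OF less_imp_le[OF tau(1)] zero_le_power2[of "norm (dF x)"]] by linarith
    finally show ?thesis .
  qed
  have fin: "(\<integral>i. A i \<partial>D) \<le> 1/(2*tau) * (\<integral>i. B i \<partial>D) + v + 8*tau*(real m)\<^sup>2*Lg\<^sup>2"
    using I1 I2 IQb unfolding C_def by (simp add: power_mult_distrib algebra_simps)
  show ?thesis
    unfolding Let_def x_def[symmetric] ustep h_def[symmetric] hstar_def[symmetric] a_def[symmetric]
      sigma2_def[symmetric] v_def[symmetric]
    using fin by (simp add: A_def B_def)
qed

end
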